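(* Let $n,k,n',k'$ be integers with $\frac{n+1}{2}<k<n$, $n/k=n'/k'$, and $k,k'$ both even. Let $G$ and $G'$ be graphs with $H_{n,k}\subseteq G\subseteq H'_{n,k}$ and $H_{n',k'}\subseteq G'\subseteq H'_{n',k'}$. If there is a homomorphism $G\to G'$, then $n'$ and $k'$ are integer multiples of $n$ and $k$, respectively. Moreover, any such homomorphism is injective, and therefore $G$ is (isomorphic to) a subgraph of $G'$.
   Context: For integers $m\ge j$ with $j$ even, $H_{m,j}$ is the graph whose vertices are the even-weight elements of $\mathbb{Z}_2^m$, with $x\sim y$ iff the Hamming distance $d(x,y)$ equals $j$; and $H'_{m,j}$ is the graph on the same vertex set with $x\sim y$ iff $d(x,y)\ge j$. The inclusions $H_{m,j}\subseteq G\subseteq H'_{m,j}$ mean $G$ has the same vertex set and its edge set lies between the two edge sets. A homomorphism is an adjacency-preserving map between vertex sets. *)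

theory Defs
  imports Complex_Main
begin

text \<open>Elements of Z_2^m are represented by their supports, i.e. subsets of {0..<m}.
  The Hamming distance is the cardinality of the symmetric difference.\<close>

definition even_cube :: "nat \<Rightarrow> nat set set" where
  "even_cube m = {x. x \<subseteq> {0..<m} \<and> even (card x)}"

definition hamming :: "nat set \<Rightarrow> nat set \<Rightarrow> nat" where
  "hamming x y = card ((x - y) \<union> (y - x))"

text \<open>A simple graph on a vertex set V is given by a symmetric adjacency relation
  supported on V.  The predicate below says that E is a graph on the vertex set of
  H_{m,j} with H_{m,j} \<subseteq> E \<subseteq> H'_{m,j}.\<close>

definition between_graph :: "nat \<Rightarrow> nat \<Rightarrow> (nat set \<Rightarrow> nat set \<Rightarrow> bool) \<Rightarrow> bool" where
  "between_graph m j E \<longleftrightarrow>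
     (\<forall>x y. E x y \<longrightarrow> E y x) \<and>
     (\<forall>x\<in>even_cube m. \<forall>y\<in>even_cube m. hamming x y = j \<longrightarrow> E x y) \<and>
     (\<forall>x y. E x y \<longrightarrow> x \<in> even_cube m \<and> y \<in> even_cube m \<and> hamming x y \<ge> j)"

definition graph_hom ::
  "'a set \<Rightarrow> ('a \<Rightarrow> 'a \<Rightarrow> bool) \<Rightarrow> 'b set \<Rightarrow> ('b \<Rightarrow> 'b \<Rightarrow> bool) \<Rightarrow> ('a \<Rightarrow> 'b) \<Rightarrow> bool" where
  "graph_hom V E V' E' f \<longleftrightarrow> f ` V \<subseteq> V' \<and> (\<forall>x\<in>V. \<forall>y\<in>V. E x y \<longrightarrow> E' (f x) (f y))"

end

theory Submission
  imports Defs
begin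


fun kraw :: "nat \<Rightarrow> nat \<Rightarrow> nat \<Rightarrow> int" where
  "kraw n 0 j = 1"
| "kraw n (Suc d) 0 = int (n choose Suc d)"
| "kraw 0 (Suc d) (Suc j) = 0"
| "kraw (Suc n) (Suc d) (Suc j) = kraw n (Suc d) j - kraw n d j"

lemma kraw_0: "kraw n d 0 = int (n choose d)"
  by (cases d) auto

definition lam :: "nat set \<Rightarrow> nat set \<Rightarrow> nat \<Rightarrow> int" where
  "lam A S d = (\<Sum>z\<in>{z. z \<subseteq> A \<and> card z = d}. (-1::int) ^ card (z \<inter> S))"

lemma subsets_split:
  assumes "finite A" "a \<in> A"
  shows "{z. z \<subseteq> A \<and> card z = Suc e} =
    {z. z \<subseteq> A - {a} \<and> card z = Suc e} \<union> insert a ` {z. z \<subseteq> A - {a} \<and> card z = e}"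
proof (intro equalityI subsetI)
  fix z assume z: "z \<in> {z. z \<subseteq> A \<and> card z = Suc e}"
  show "z \<in> {z. z \<subseteq> A - {a} \<and> card z = Suc e} \<union> insert a ` {z. z \<subseteq> A - {a} \<and> card z = e}"
  proof (cases "a \<in> z")
    case True
    have fz: "finite z" using finite_subset[of z A] z assms(1) by simp
    have "z = insert a (z - {a})" using True by auto
    moreover have "card (z - {a}) = e" using z True fz by auto
    moreover have "z - {a} \<subseteq> A - {a}" using z by auto
    ultimately have "z \<in> insert a ` {z. z \<subseteq> A - {a} \<and> card z = e}"
      by (intro image_eqI[of z "insert a" "z - {a}"]) simp_all
    then show ?thesis by (rule UnI2)
  next
    case False
    then have "z \<in> {z. z \<subseteq> A - {a} \<and> card z = Suc e}" using z by auto
    then show ?thesis by (rule UnI1)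
  qed
next
  fix z assume z: "z \<in> {z. z \<subseteq> A - {a} \<and> card z = Suc e} \<union> insert a ` {z. z \<subseteq> A - {a} \<and> card z = e}"
  then show "z \<in> {z. z \<subseteq> A \<and> card z = Suc e}"
  proof
    assume "z \<in> {z. z \<subseteq> A - {a} \<and> card z = Suc e}" then show ?thesis by auto
  next
    assume "z \<in> insert a ` {z. z \<subseteq> A - {a} \<and> card z = e}"
    then obtain w where w: "w \<subseteq> A - {a}" "card w = e" "z = insert a w" by auto
    have "finite w" using finite_subset[of w A] w(1) assms(1) by auto
    moreover have "a \<notin> w" using w by auto
    ultimately have "card z = Suc e" using w by (simp add: card_insert_if)
    then show ?thesis using w assms by auto
  qed
qed

lemma sum_subsets_split:
  assumes "finite A" "a \<in> A"
  shows "(\<Sum>z\<in>{z. z \<subseteq> A \<and> card z = Suc e}. F z) =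
    (\<Sum>z\<in>{z. z \<subseteq> A - {a} \<and> card z = Suc e}. F z) + (\<Sum>w\<in>{z. z \<subseteq> A - {a} \<and> card z = e}. F (insert a w))"
proof -
  have fin: "finite {z. z \<subseteq> B \<and> card z = m}" if "finite B" for B m
    by (rule finite_subset[of _ "Pow B"]) (auto simp: that)
  have inj: "inj_on (insert a) {z. z \<subseteq> A - {a} \<and> card z = e}"
  proof (rule inj_onI)
    fix x y assume "x \<in> {z. z \<subseteq> A - {a} \<and> card z = e}" "y \<in> {z. z \<subseteq> A - {a} \<and> card z = e}" "insert a x = insert a y"
    then show "x = y" using insert_ident[of a x y] by auto
  qed
  have disj: "{z. z \<subseteq> A - {a} \<and> card z = Suc e} \<inter> insert a ` {z. z \<subseteq> A - {a} \<and> card z = e} = {}"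
  proof (rule equals0I)
    fix z assume "z \<in> {z. z \<subseteq> A - {a} \<and> card z = Suc e} \<inter> insert a ` {z. z \<subseteq> A - {a} \<and> card z = e}"
    then have "z \<subseteq> A - {a}" "a \<in> z" by auto
    then show False by auto
  qed
  show ?thesis
    unfolding subsets_split[OF assms, of e]
    apply (subst sum.union_disjoint)
    subgoal using fin[of "A - {a}" "Suc e"] assms by simp
    subgoal using fin[of "A - {a}" e] assms by simp
    subgoal using disj .
    apply (subst sum.reindex[OF inj]) apply simp
    done
qed

lemma lam_zero_d: "finite A \<Longrightarrow> lam A S 0 = 1"
proof -
  assume "finite A"
  have "{z. z \<subseteq> A \<and> card z = 0} = {{}}"
  proof (intro equalityI subsetI)
    fix z assume "z \<in> {z. z \<subseteq> A \<and> card z = 0}"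
    moreover then have "finite z" using \<open>finite A\<close> finite_subset[of z A] by simp
    ultimately show "z \<in> {{}}" by simp
  qed auto
  then show ?thesis unfolding lam_def by simp
qed

lemma lam_empty: "finite A \<Longrightarrow> lam A {} d = int (card A choose d)"
  unfolding lam_def by (simp add: n_subsets)

lemma lam_rec:
  assumes "finite A" "a \<in> S" "S \<subseteq> A"
  shows "lam A S (Suc e) = lam (A - {a}) (S - {a}) (Suc e) - lam (A - {a}) (S - {a}) e"
proof -
  have aA: "a \<in> A" using assms by auto
  have 1: "(\<Sum>z\<in>{z. z \<subseteq> A - {a} \<and> card z = m}. (-1::int) ^ card (z \<inter> S)) = lam (A - {a}) (S - {a}) m" for m
    unfolding lam_def
  proof (rule sum.cong[OF refl])
    fix x assume "x \<in> {z. z \<subseteq> A - {a} \<and> card z = m}"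
    then have "x \<inter> S = x \<inter> (S - {a})" by blast
    then show "(-1::int) ^ card (x \<inter> S) = (-1) ^ card (x \<inter> (S - {a}))" by simp
  qed
  have 2: "(\<Sum>w\<in>{z. z \<subseteq> A - {a} \<and> card z = e}. (-1::int) ^ card (insert a w \<inter> S)) = - lam (A - {a}) (S - {a}) e"
    unfolding lam_def sum_negf[symmetric]
  proof (rule sum.cong[OF refl])
    fix w assume w: "w \<in> {z. z \<subseteq> A - {a} \<and> card z = e}"
    have fw: "finite (w \<inter> (S - {a}))" using w assms(1) using finite_subset[of "w \<inter> (S - {a})" A] by auto
    have "insert a w \<inter> S = insert a (w \<inter> (S - {a}))" using assms(2) by auto
    then have "card (insert a w \<inter> S) = Suc (card (w \<inter> (S - {a})))" using fw by simp
    then show "(-1::int) ^ card (insert a w \<inter> S) = - ((-1) ^ card (w \<inter> (S - {a})))" by simp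
  qed
  show ?thesis unfolding lam_def[of A S] sum_subsets_split[OF assms(1) aA] 1 2 by simp
qed

lemma lam_kraw: "finite A \<Longrightarrow> S \<subseteq> A \<Longrightarrow> lam A S d = kraw (card A) d (card S)"
proof (induction "card S" arbitrary: A S d)
  case 0
  then have "S = {}" using finite_subset[of S A] by simp
  then show ?case using 0 by (simp add: lam_empty kraw_0)
next
  case (Suc j)
  then have "S \<noteq> {}" by auto
  then obtain a where a: "a \<in> S" by auto
  have fS: "finite S" using Suc.prems finite_subset[of S A] by simp
  have aA: "a \<in> A" using a Suc.prems(2) by blast
  have cA: "card A = Suc (card (A - {a}))" using card_Suc_Diff1[OF Suc.prems(1) aA] by simp
  have cS: "card (S - {a}) = j" using Suc.hyps(2) a fS by simp
  show ?case
  proof (cases d)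
    case 0
    then show ?thesis using lam_zero_d Suc.prems by simp
  next
    case (Suc e)
    have "lam A S d = lam (A - {a}) (S - {a}) (Suc e) - lam (A - {a}) (S - {a}) e"
      using lam_rec[OF Suc.prems(1) a Suc.prems(2)] Suc by simp
    also have "\<dots> = kraw (card (A - {a})) (Suc e) j - kraw (card (A - {a})) e j"
    proof -
      have sub: "S - {a} \<subseteq> A - {a}" using Suc.prems by auto
      have fin: "finite (A - {a})" using Suc.prems by auto
      show ?thesis using Suc.hyps(1)[OF cS[symmetric] fin sub] cS by simp
    qed
    also have "\<dots> = kraw (card A) d (card S)"
      using cA Suc.hyps(2)[symmetric] Suc by simp
    finally show ?thesis .
  qed
qed

lemma sgn_cancel: "(s::int) * s = 1 \<Longrightarrow> x = s * y \<Longrightarrow> s * x = y"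
  by (simp add: mult.assoc[symmetric])

lemma neg1_pow_diff: "c \<le> d \<Longrightarrow> (-1::int) ^ (d - c) = (-1) ^ d * (-1) ^ c"
proof -
  assume "c \<le> d"
  then obtain e where e: "d = c + e" using le_Suc_ex by blast
  have "((-1::int) ^ c) * (-1) ^ c = 1" by (simp flip: power_add)
  then show ?thesis unfolding e by (simp add: power_add algebra_simps)
qed

lemma lam_compl_S:
  assumes "finite A" "S \<subseteq> A"
  shows "lam A (A - S) d = (-1) ^ d * lam A S d"
  unfolding lam_def sum_distrib_left
proof (rule sum.cong[OF refl])
  fix z assume z: "z \<in> {z. z \<subseteq> A \<and> card z = d}"
  have fz: "finite z" using finite_subset[of z A] z assms(1) by simp
  have "z \<inter> (A - S) = z - (z \<inter> S)" using z by auto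
  then have "card (z \<inter> (A - S)) = d - card (z \<inter> S)" using z fz by (simp add: card_Diff_subset)
  moreover have "card (z \<inter> S) \<le> d" using z fz card_mono[of z "z \<inter> S"] by simp
  ultimately show "(-1::int) ^ card (z \<inter> (A - S)) = (-1) ^ d * (-1) ^ card (z \<inter> S)"
    using neg1_pow_diff by simp
qed

lemma lam_compl_z:
  assumes "finite A" "S \<subseteq> A" "d \<le> card A"
  shows "lam A S (card A - d) = (-1) ^ card S * lam A S d"
  unfolding lam_def sum_distrib_left
proof (rule sum.reindex_bij_witness[of _ "\<lambda>w. A - w" "\<lambda>w. A - w"])
  fix z assume z: "z \<in> {z. z \<subseteq> A \<and> card z = card A - d}"
  then show "A - (A - z) = z" by auto
  have fz: "finite z" using finite_subset[of z A] z assms(1) by simp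
  have cz: "card z \<le> card A" using z assms(1) card_mono by auto
  then show "A - z \<in> {z. z \<subseteq> A \<and> card z = d}" using z fz assms(3) by (simp add: card_Diff_subset)
  have fS: "finite S" using assms finite_subset[of S A] by simp
  have "(A - z) \<inter> S = S - (z \<inter> S)" using assms z by auto
  then have "card ((A - z) \<inter> S) = card S - card (z \<inter> S)" using fS by (simp add: card_Diff_subset)
  moreover have "card (z \<inter> S) \<le> card S" using fS by (simp add: card_mono)
  ultimately have "(-1::int) ^ card ((A - z) \<inter> S) = (-1) ^ card S * (-1) ^ card (z \<inter> S)"
    using neg1_pow_diff by simp
  moreover have "((-1::int) ^ card S) * (-1) ^ card S = 1" by (simp flip: power_add)
  ultimately show "(-1::int) ^ card S * (-1) ^ card ((A - z) \<inter> S) = (-1) ^ card (z \<inter> S)"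
    using sgn_cancel by blast
next
  fix w assume w: "w \<in> {z. z \<subseteq> A \<and> card z = d}"
  then show "A - (A - w) = w" by auto
  have fw: "finite w" using w assms(1) finite_subset[of w A] by simp
  show "A - w \<in> {z. z \<subseteq> A \<and> card z = card A - d}" using w fw by (simp add: card_Diff_subset)
qed

lemma kraw_sym_j:
  assumes "j \<le> n" shows "kraw n d (n - j) = (-1) ^ d * kraw n d j"
proof -
  have "kraw n d (n - j) = lam {0..<n} ({0..<n} - {0..<j}) d"
    using assms by (subst lam_kraw) auto
  also have "\<dots> = (-1) ^ d * lam {0..<n} {0..<j} d" by (rule lam_compl_S) (use assms in auto)
  also have "\<dots> = (-1) ^ d * kraw n d j" using assms by (subst lam_kraw) auto
  finally show ?thesis .
qed

lemma kraw_sym_d: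
  assumes "j \<le> n" "d \<le> n" shows "kraw n (n - d) j = (-1) ^ j * kraw n d j"
proof -
  have "kraw n (n - d) j = lam {0..<n} {0..<j} (card {0..<n} - d)"
    using assms by (subst lam_kraw) auto
  also have "\<dots> = (-1) ^ j * lam {0..<n} {0..<j} d" using assms by (subst lam_compl_z) auto
  also have "\<dots> = (-1) ^ j * kraw n d j" using assms by (subst lam_kraw) auto
  finally show ?thesis .
qed

lemma kraw_out:
  assumes "j \<le> n" shows "kraw (Suc n) (Suc d) j = kraw n (Suc d) j + kraw n d j"
proof -
  have sq: "((-1::int) ^ D) * (-1) ^ D = 1" for D by (simp flip: power_add)
  have "kraw (Suc n) (Suc d) (Suc n - j) = (-1) ^ Suc d * kraw (Suc n) (Suc d) j"
    using assms by (intro kraw_sym_j) simp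
  then have "kraw (Suc n) (Suc d) j = (-1) ^ Suc d * kraw (Suc n) (Suc d) (Suc (n - j))"
    using assms sq[of "Suc d"] sgn_cancel by (simp add: Suc_diff_le)
  also have "\<dots> = (-1) ^ Suc d * (kraw n (Suc d) (n - j) - kraw n d (n - j))" by simp
  also have "\<dots> = (-1) ^ Suc d * ((-1) ^ Suc d * kraw n (Suc d) j - (-1) ^ d * kraw n d j)"
    using kraw_sym_j[OF assms] by simp
  also have "\<dots> = kraw n (Suc d) j + kraw n d j"
    using sq[of d] by (simp add: algebra_simps)
  finally show ?thesis .
qed

lemma kraw_mid_odd:
  assumes "odd i" "i \<le> 2 * d" shows "kraw (2 * d) d i = 0"
proof -
  have "kraw (2 * d) (2 * d - d) i = (-1) ^ i * kraw (2 * d) d i"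
    using assms by (intro kraw_sym_d) auto
  then show ?thesis using assms by simp
qed

lemma kraw_one_add:
  assumes "1 \<le> m"
  shows "kraw (Suc m) (Suc e) 1 = kraw m (Suc e) 1 + kraw m e 1"
proof -
  obtain p where p: "m = Suc p" using assms by (cases m) auto
  show ?thesis
  proof (cases e)
    case 0
    then show ?thesis using p by (simp add: kraw_0)
  next
    case (Suc f)
    then show ?thesis using p by (simp add: kraw_0)
  qed
qed

lemma kraw_one_pos:
  assumes "2 * d + 1 \<le> m" shows "kraw m d 1 > 0"
proof (cases d)
  case 0 then show ?thesis by simp
next
  case (Suc e)
  obtain p where p: "m = Suc p" using assms by (cases m) auto
  have "p choose e < p choose Suc e" using assms p Suc by (intro binomial_strict_mono) auto
  then show ?thesis using p Suc by (simp add: kraw_0)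
qed

lemma kraw_one_nonneg:
  assumes "2 * d + 1 \<le> m" shows "kraw m d 1 \<ge> 0"
proof (cases d)
  case 0 then show ?thesis by simp
next
  case (Suc e)
  obtain p where p: "m = Suc p" using assms by (cases m) auto
  have "p choose e \<le> p choose Suc e" using assms p Suc by (intro binomial_mono) auto
  then show ?thesis using p Suc by (simp add: kraw_0)
qed

lemma kraw_weak:
  "2 * d + 1 \<le> n \<Longrightarrow> 1 \<le> j \<Longrightarrow> j \<le> n - 1 \<Longrightarrow> \<bar>kraw n d j\<bar> \<le> kraw n d 1"
proof (induction n arbitrary: d j)
  case 0 then show ?case by simp
next
  case (Suc m)
  show ?case
  proof (cases d)
    case 0 then show ?thesis by simp
  next
    case (Suc e)
    show ?thesis
    proof (cases "j = 1")
      case True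
      then show ?thesis using kraw_one_nonneg[of d "Suc m"] Suc.prems by simp
    next
      case False
      then obtain i where i: "j = Suc i" "1 \<le> i" "i \<le> m - 1" using Suc.prems
        by (cases j) auto
      have m3: "1 \<le> m" using Suc.prems \<open>d = Suc e\<close> by simp
      have rec: "kraw (Suc m) d j = kraw m d i - kraw m e i" using i \<open>d = Suc e\<close> by simp
      have one: "kraw (Suc m) d 1 = kraw m d 1 + kraw m e 1"
        using kraw_one_add[OF m3] \<open>d = Suc e\<close> by simp
      have IHe: "\<bar>kraw m e i'\<bar> \<le> kraw m e 1" if "1 \<le> i'" "i' \<le> m - 1" for i'
        using Suc.IH[of e i'] that Suc.prems \<open>d = Suc e\<close> by simp
      show ?thesis
      proof (cases "2 * d + 1 \<le> m")
        case True
        have "\<bar>kraw m d i\<bar> \<le> kraw m d 1" using Suc.IH[of d i] True i by simp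
        then show ?thesis using rec one IHe[OF i(2,3)] by linarith
      next
        case False
        then have md: "m = 2 * d" using Suc.prems by simp
        have z1: "kraw m d 1 = 0" using md kraw_mid_odd[of 1 d] \<open>d = Suc e\<close> by simp
        show ?thesis
        proof (cases "odd i")
          case True
          have "kraw m d i = 0" using md kraw_mid_odd[of i d] True i by simp
          then show ?thesis using rec one z1 IHe[OF i(2,3)] by simp
        next
          case False
          have jodd: "odd j" using False i by simp
          have jm: "j \<le> m - 1" using jodd md i by presburger
          have "kraw (Suc m) d j = kraw m d j + kraw m e j"
            using kraw_out[of j m e] \<open>d = Suc e\<close> jm by simp
          moreover have "kraw m d j = 0" using md kraw_mid_odd[of j d] jodd jm by simp
          ultimately show ?thesis using one z1 IHe[of j] jm i by simp
        qed
      qed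
    qed
  qed
qed

lemma kraw_strict:
  "1 \<le> d \<Longrightarrow> 2 * d + 2 \<le> n \<Longrightarrow> 2 \<le> j \<Longrightarrow> j \<le> n - 2 \<Longrightarrow> \<bar>kraw n d j\<bar> < kraw n d 1"
proof (induction n arbitrary: d j)
  case 0 then show ?case by simp
next
  case (Suc m)
  obtain e where e: "d = Suc e" using Suc.prems by (cases d) auto
  obtain i where i: "j = Suc i" "1 \<le> i" "i \<le> m - 2" using Suc.prems by (cases j) auto
  have m3: "1 \<le> m" using Suc.prems by simp
  have rec: "kraw (Suc m) d j = kraw m d i - kraw m e i" using i e by simp
  have one: "kraw (Suc m) d 1 = kraw m d 1 + kraw m e 1"
    using kraw_one_add[OF m3] e by simp
  have Wd: "\<bar>kraw m d i\<bar> \<le> kraw m d 1" using kraw_weak[of d m i] Suc.prems i by simp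
  have We: "\<bar>kraw m e i\<bar> \<le> kraw m e 1" using kraw_weak[of e m i] Suc.prems i e by simp
  show ?case
  proof (cases "i = 1")
    case True
    have "kraw m d 1 > 0" using kraw_one_pos[of d m] Suc.prems by simp
    moreover have "kraw m e 1 > 0" using kraw_one_pos[of e m] Suc.prems e by simp
    ultimately show ?thesis using rec one True by simp
  next
    case False
    show ?thesis
    proof (cases "2 * d + 2 \<le> m")
      case True
      have "\<bar>kraw m d i\<bar> < kraw m d 1" using Suc.IH[of d i] True i False Suc.prems by simp
      then show ?thesis using rec one We by linarith
    next
      case F2: False
      have "1 \<le> e" using F2 i False Suc.prems e by simp
      then have "\<bar>kraw m e i\<bar> < kraw m e 1" using Suc.IH[of e i] F2 i False Suc.prems e by simp
      then show ?thesis using rec one Wd by linarith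
    qed
  qed
qed



definition symd :: "nat set \<Rightarrow> nat set \<Rightarrow> nat set" where
  "symd a b = (a - b) \<union> (b - a)"

definition chi :: "nat set \<Rightarrow> nat set \<Rightarrow> real" where
  "chi S x = (-1) ^ card (S \<inter> x)"

lemma chi_comm: "chi S x = chi x S"
  unfolding chi_def by (simp add: Int_commute)

lemma chi_sq: "chi S x * chi S x = 1"
  unfolding chi_def by (simp flip: power_add)

lemma chi_mult:
  assumes "finite x"
  shows "chi S x * chi T x = chi (symd S T) x"
proof -
  have e1: "S \<inter> x = ((S - T) \<inter> x) \<union> (S \<inter> T \<inter> x)" by blast
  have e2: "T \<inter> x = ((T - S) \<inter> x) \<union> (S \<inter> T \<inter> x)" by blast
  have e3: "symd S T \<inter> x = ((S - T) \<inter> x) \<union> ((T - S) \<inter> x)" unfolding symd_def by blast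
  have c1: "card (S \<inter> x) = card ((S - T) \<inter> x) + card (S \<inter> T \<inter> x)"
    unfolding e1 by (rule card_Un_disjoint) (use assms in auto)
  have c2: "card (T \<inter> x) = card ((T - S) \<inter> x) + card (S \<inter> T \<inter> x)"
    unfolding e2 by (rule card_Un_disjoint) (use assms in auto)
  have c3: "card (symd S T \<inter> x) = card ((S - T) \<inter> x) + card ((T - S) \<inter> x)"
    unfolding e3 by (rule card_Un_disjoint) (use assms in auto)
  have "((-1::real) ^ card (S \<inter> T \<inter> x)) * (-1) ^ card (S \<inter> T \<inter> x) = 1" by (simp flip: power_add)
  then show ?thesis unfolding chi_def c1 c2 c3 power_add by (simp add: algebra_simps)
qed

lemma chi_symd_arg:
  assumes "finite T"
  shows "chi T (symd x z) = chi T x * chi T z"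
  using chi_mult[OF assms, of x z] by (simp add: chi_comm)

lemma chi_flip:
  assumes "finite x" "r \<in> R"
  shows "chi R (symd x {r}) = - chi R x"
proof -
  have fx: "finite (R \<inter> x)" using assms by auto
  show ?thesis
  proof (cases "r \<in> x")
    case True
    have e: "R \<inter> symd x {r} = (R \<inter> x) - {r}" unfolding symd_def using True by auto
    have "r \<in> R \<inter> x" using True assms by auto
    then have "card (R \<inter> x) = Suc (card ((R \<inter> x) - {r}))" using fx card_Suc_Diff1 by metis
    then show ?thesis unfolding chi_def e by simp
  next
    case False
    have "R \<inter> symd x {r} = insert r (R \<inter> x)" unfolding symd_def using False assms by auto
    moreover have "card (insert r (R \<inter> x)) = Suc (card (R \<inter> x))" using fx False by simp
    ultimately show ?thesis unfolding chi_def by simp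
  qed
qed

lemma symd_empty_iff: "symd a b = {} \<longleftrightarrow> a = b"
  unfolding symd_def by auto

lemma symd_in_Pow: "x \<subseteq> A \<Longrightarrow> z \<subseteq> A \<Longrightarrow> symd x z \<in> Pow A"
  unfolding symd_def by auto

lemma chi_sum:
  assumes "finite A" "R \<subseteq> A"
  shows "(\<Sum>x\<in>Pow A. chi R x) = (if R = {} then 2 ^ card A else 0)"
proof (cases "R = {}")
  case True
  then show ?thesis using assms by (simp add: chi_def card_Pow)
next
  case False
  then obtain r where r: "r \<in> R" by auto
  have rA: "r \<in> A" using r assms by auto
  have "(\<Sum>x\<in>Pow A. chi R x) = (\<Sum>x\<in>Pow A. - chi R x)"
  proof (rule sum.reindex_bij_witness[of _ "\<lambda>x. symd x {r}" "\<lambda>x. symd x {r}"])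
    fix x assume x: "x \<in> Pow A"
    show "symd (symd x {r}) {r} = x" unfolding symd_def by auto
    show "symd x {r} \<in> Pow A" using x rA unfolding symd_def by auto
    have "finite x" using x assms finite_subset[of x A] by simp
    then show "- chi R (symd x {r}) = chi R x" using chi_flip r by simp
  next
    fix x assume x: "x \<in> Pow A"
    show "symd (symd x {r}) {r} = x" unfolding symd_def by auto
    show "symd x {r} \<in> Pow A" using x rA unfolding symd_def by auto
  qed
  then have "(\<Sum>x\<in>Pow A. chi R x) = 0" by (simp add: sum_negf)
  then show ?thesis using False by simp
qed

lemma chi_orth:
  assumes "finite A" "S \<subseteq> A" "T \<subseteq> A"
  shows "(\<Sum>x\<in>Pow A. chi S x * chi T x) = (if S = T then 2 ^ card A else 0)"
proof -
  have "(\<Sum>x\<in>Pow A. chi S x * chi T x) = (\<Sum>x\<in>Pow A. chi (symd S T) x)"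
  proof (rule sum.cong[OF refl])
    fix x assume "x \<in> Pow A"
    then have "finite x" using assms finite_subset[of x A] by simp
    then show "chi S x * chi T x = chi (symd S T) x" by (rule chi_mult)
  qed
  also have "\<dots> = (if symd S T = {} then 2 ^ card A else 0)"
    by (rule chi_sum) (use assms in \<open>auto simp: symd_def\<close>)
  also have "(symd S T = {}) = (S = T)" unfolding symd_def by auto
  finally show ?thesis .
qed

definition fc :: "nat set \<Rightarrow> (nat set \<Rightarrow> real) \<Rightarrow> nat set \<Rightarrow> real" where
  "fc A g S = (\<Sum>y\<in>Pow A. g y * chi S y) / 2 ^ card A"

lemma fourier_inv:
  assumes "finite A" "x \<subseteq> A"
  shows "(\<Sum>S\<in>Pow A. fc A g S * chi S x) = g x"
proof -
  have fin: "finite y" if "y \<in> Pow A" for y using that assms finite_subset[of y A] by simp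
  have e: "fc A g S * chi S x = (\<Sum>y\<in>Pow A. g y * (chi S y * chi S x)) / 2 ^ card A" for S
    unfolding fc_def by (simp add: sum_distrib_right mult.assoc)
  have "(\<Sum>S\<in>Pow A. fc A g S * chi S x) = (\<Sum>S\<in>Pow A. \<Sum>y\<in>Pow A. g y * (chi S y * chi S x)) / 2 ^ card A"
    unfolding e sum_divide_distrib ..
  also have "\<dots> = (\<Sum>y\<in>Pow A. g y * (\<Sum>S\<in>Pow A. chi (symd y x) S)) / 2 ^ card A"
  proof -
    have m: "chi S y * chi S x = chi (symd y x) S" if "S \<in> Pow A" for S y
    proof -
      have "finite S" using that fin by blast
      then show ?thesis unfolding chi_comm[of S y] chi_comm[of S x] by (rule chi_mult)
    qed
    have "(\<Sum>S\<in>Pow A. \<Sum>y\<in>Pow A. g y * (chi S y * chi S x)) = (\<Sum>y\<in>Pow A. \<Sum>S\<in>Pow A. g y * (chi S y * chi S x))"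
      by (rule sum.swap)
    also have "\<dots> = (\<Sum>y\<in>Pow A. g y * (\<Sum>S\<in>Pow A. chi (symd y x) S))"
      unfolding sum_distrib_left using m by simp
    finally show ?thesis by simp
  qed
  also have "\<dots> = (\<Sum>y\<in>Pow A. if y = x then g y * 2 ^ card A else 0) / 2 ^ card A"
  proof -
    have "g y * (\<Sum>S\<in>Pow A. chi (symd y x) S) = (if y = x then g y * 2 ^ card A else 0)" if y: "y \<in> Pow A" for y
    proof -
      have "symd y x \<subseteq> A" using y assms symd_in_Pow by auto
      then show ?thesis using chi_sum[OF assms(1), of "symd y x"] symd_empty_iff[of y x] by auto
    qed
    then show ?thesis by simp
  qed
  also have "\<dots> = g x" using assms by (simp add: sum.delta')
  finally show ?thesis .
qed

definition QF :: "nat set \<Rightarrow> (nat set \<Rightarrow> real) \<Rightarrow> nat \<Rightarrow> real" where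
  "QF A g k = (\<Sum>x\<in>Pow A. \<Sum>z\<in>{z. z \<subseteq> A \<and> card z = k}. g x * g (symd x z))"

lemma lam_chi: "finite A \<Longrightarrow> (\<Sum>z\<in>{z. z \<subseteq> A \<and> card z = k}. chi S z) = of_int (lam A S k)"
  unfolding lam_def chi_def by (simp add: Int_commute)

lemma sum_swap4:
  "(\<Sum>x\<in>X. \<Sum>z\<in>Z. \<Sum>s\<in>S. \<Sum>t\<in>T. f x z s t) = (\<Sum>s\<in>S. \<Sum>t\<in>T. \<Sum>x\<in>X. \<Sum>z\<in>Z. f x z s t)"
proof -
  have "(\<Sum>x\<in>X. \<Sum>z\<in>Z. \<Sum>s\<in>S. \<Sum>t\<in>T. f x z s t) = (\<Sum>x\<in>X. \<Sum>s\<in>S. \<Sum>z\<in>Z. \<Sum>t\<in>T. f x z s t)"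
    by (rule sum.cong[OF refl], rule sum.swap)
  also have "\<dots> = (\<Sum>x\<in>X. \<Sum>s\<in>S. \<Sum>t\<in>T. \<Sum>z\<in>Z. f x z s t)"
    by (rule sum.cong[OF refl], rule sum.cong[OF refl], rule sum.swap)
  also have "\<dots> = (\<Sum>s\<in>S. \<Sum>x\<in>X. \<Sum>t\<in>T. \<Sum>z\<in>Z. f x z s t)"
    by (rule sum.swap)
  also have "\<dots> = (\<Sum>s\<in>S. \<Sum>t\<in>T. \<Sum>x\<in>X. \<Sum>z\<in>Z. f x z s t)"
    by (rule sum.cong[OF refl], rule sum.swap)
  finally show ?thesis .
qed

lemma sum_prod2: "(\<Sum>x\<in>X. \<Sum>z\<in>Z. (p::real) * (a x * b z)) = p * ((\<Sum>x\<in>X. a x) * (\<Sum>z\<in>Z. b z))"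
  by (subst sum_product) (simp add: sum_distrib_left)

lemma QF_fourier:
  assumes "finite A"
  shows "QF A g k = 2 ^ card A * (\<Sum>S\<in>Pow A. (fc A g S)^2 * of_int (lam A S k))"
proof -
  let ?Z = "{z. z \<subseteq> A \<and> card z = k}"
  let ?c = "fc A g"
  have finZ: "finite ?Z" by (rule finite_subset[of _ "Pow A"]) (auto simp: assms)
  have finP: "finite (Pow A)" using assms by simp
  have fin: "finite y" if "y \<in> Pow A" for y using that assms finite_subset[of y A] by simp
  have "QF A g k = (\<Sum>x\<in>Pow A. \<Sum>z\<in>?Z. (\<Sum>S\<in>Pow A. ?c S * chi S x) * (\<Sum>T\<in>Pow A. ?c T * (chi T x * chi T z)))"
    unfolding QF_def
  proof (intro sum.cong refl)
    fix x z assume x: "x \<in> Pow A" and z: "z \<in> ?Z"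
    have "symd x z \<in> Pow A" using x z symd_in_Pow by auto
    then have "g (symd x z) = (\<Sum>T\<in>Pow A. ?c T * chi T (symd x z))"
      using fourier_inv[OF assms, of "symd x z" g] by auto
    also have "\<dots> = (\<Sum>T\<in>Pow A. ?c T * (chi T x * chi T z))"
      using chi_symd_arg fin by auto
    finally show "g x * g (symd x z) = (\<Sum>S\<in>Pow A. ?c S * chi S x) * (\<Sum>T\<in>Pow A. ?c T * (chi T x * chi T z))"
      using fourier_inv[OF assms, of x g] x by simp
  qed
  also have "\<dots> = (\<Sum>x\<in>Pow A. \<Sum>z\<in>?Z. \<Sum>S\<in>Pow A. \<Sum>T\<in>Pow A. (?c S * ?c T) * ((chi S x * chi T x) * chi T z))"
    unfolding sum_product by (intro sum.cong refl) (simp add: ac_simps)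
  also have "\<dots> = (\<Sum>S\<in>Pow A. \<Sum>T\<in>Pow A. ?c S * ?c T * ((\<Sum>x\<in>Pow A. chi S x * chi T x) * (\<Sum>z\<in>?Z. chi T z)))"
  proof -
    have "(\<Sum>x\<in>Pow A. \<Sum>z\<in>?Z. \<Sum>S\<in>Pow A. \<Sum>T\<in>Pow A. (?c S * ?c T) * ((chi S x * chi T x) * chi T z))
        = (\<Sum>S\<in>Pow A. \<Sum>T\<in>Pow A. \<Sum>x\<in>Pow A. \<Sum>z\<in>?Z. (?c S * ?c T) * ((chi S x * chi T x) * chi T z))"
      by (rule sum_swap4)
    also have "\<dots> = (\<Sum>S\<in>Pow A. \<Sum>T\<in>Pow A. ?c S * ?c T * ((\<Sum>x\<in>Pow A. chi S x * chi T x) * (\<Sum>z\<in>?Z. chi T z)))"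
      by (intro sum.cong refl) (rule sum_prod2)
    finally show ?thesis .
  qed
  also have "\<dots> = (\<Sum>S\<in>Pow A. \<Sum>T\<in>Pow A. if T = S then ?c S * ?c S * (2 ^ card A * of_int (lam A S k)) else 0)"
    by (intro sum.cong refl) (auto simp: chi_orth[OF assms] lam_chi[OF assms])
  also have "\<dots> = 2 ^ card A * (\<Sum>S\<in>Pow A. (fc A g S)^2 * of_int (lam A S k))"
    using finP by (simp add: sum.delta sum_distrib_left power2_eq_square mult.assoc mult.left_commute)
  finally show ?thesis .
qed



lemma kraw_min:
  assumes "even k" "n + 1 < 2 * k" "k < n" "j \<le> n"
  shows "kraw n k 1 \<le> kraw n k j \<and> (j \<noteq> 1 \<and> j \<noteq> n - 1 \<longrightarrow> kraw n k 1 < kraw n k j)"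
proof -
  define d where "d = n - k"
  have d1: "1 \<le> d" and d2: "2 * d + 2 \<le> n" and kd: "k = n - d" and dn: "d \<le> n"
    using assms unfolding d_def by auto
  have h1: "kraw n k j' = (-1) ^ j' * kraw n d j'" if "j' \<le> n" for j'
    using kraw_sym_d[OF that dn] kd by simp
  have h1': "kraw n k 1 = - kraw n d 1" using h1[of 1] assms by simp
  have pos: "kraw n d 1 > 0" using kraw_one_pos[of d n] d2 by simp
  have bin: "kraw n k 0 \<ge> 0" by (simp add: kraw_0)
  have top: "kraw n k n = kraw n k 0"
    using kraw_sym_j[of 0 n k] assms(1) by simp
  have top1: "kraw n k (n - 1) = kraw n k 1"
    using kraw_sym_j[of 1 n k] assms by simp
  show ?thesis
  proof (cases "j = 0 \<or> j = n")
    case True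
    then have "kraw n k j \<ge> 0" using bin top by auto
    then show ?thesis using h1' pos by auto
  next
    case False
    show ?thesis
    proof (cases "j = 1 \<or> j = n - 1")
      case True
      then show ?thesis using top1 by auto
    next
      case F2: False
      then have "2 \<le> j" "j \<le> n - 2" using False assms(4) by auto
      then have "\<bar>kraw n d j\<bar> < kraw n d 1" using kraw_strict[of d n j] d1 d2 by simp
      moreover have "(-1) ^ j * kraw n d j \<ge> - \<bar>kraw n d j\<bar>"
        by (cases "even j") auto
      ultimately have "kraw n k 1 < kraw n k j" using h1[OF assms(4)] h1' by simp
      then show ?thesis by simp
    qed
  qed
qed

lemma QF_zero: "finite A \<Longrightarrow> QF A g 0 = (\<Sum>x\<in>Pow A. (g x)^2)"
proof -
  assume fA: "finite A"
  have "{z. z \<subseteq> A \<and> card z = 0} = {{}}"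
  proof (intro equalityI subsetI)
    fix z assume "z \<in> {z. z \<subseteq> A \<and> card z = 0}"
    moreover then have "finite z" using fA finite_subset[of z A] by simp
    ultimately show "z \<in> {{}}" by simp
  qed auto
  moreover have "symd x {} = x" for x unfolding symd_def by auto
  ultimately show ?thesis unfolding QF_def by (simp add: power2_eq_square)
qed

lemma QF_gap:
  assumes "finite A" "\<And>S. S \<in> Pow A \<Longrightarrow> of_int (lam A S k) \<ge> \<mu>"
  shows "QF A g k - \<mu> * QF A g 0 = 2 ^ card A * (\<Sum>S\<in>Pow A. (fc A g S)^2 * (of_int (lam A S k) - \<mu>))"
proof -
  have l0: "lam A S 0 = 1" for S using lam_zero_d[OF assms(1)] .
  show ?thesis
    unfolding QF_fourier[OF assms(1), of g k] QF_fourier[OF assms(1), of g 0] l0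
    by (simp add: sum_subtractf sum_distrib_left algebra_simps)
qed

lemma QF_ge:
  assumes "finite A" "\<And>S. S \<in> Pow A \<Longrightarrow> of_int (lam A S k) \<ge> \<mu>"
  shows "QF A g k \<ge> \<mu> * QF A g 0"
proof -
  have "(\<Sum>S\<in>Pow A. (fc A g S)^2 * (of_int (lam A S k) - \<mu>)) \<ge> 0"
    using assms(2) by (intro sum_nonneg mult_nonneg_nonneg) auto
  then show ?thesis using QF_gap[OF assms, of g] by (smt (verit) zero_le_power mult_nonneg_nonneg)
qed

lemma QF_eq:
  assumes "finite A" "\<And>S. S \<in> Pow A \<Longrightarrow> of_int (lam A S k) \<ge> \<mu>"
    and "QF A g k = \<mu> * QF A g 0" and "S \<in> Pow A" and "of_int (lam A S k) > \<mu>"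
  shows "fc A g S = 0"
proof -
  have "(\<Sum>S\<in>Pow A. (fc A g S)^2 * (of_int (lam A S k) - \<mu>)) = 0"
    using QF_gap[OF assms(1,2), of g] assms(3) by simp
  then have "\<forall>S\<in>Pow A. (fc A g S)^2 * (of_int (lam A S k) - \<mu>) = 0"
    using assms(1,2) by (subst (asm) sum_nonneg_eq_0_iff) auto
  then show ?thesis using assms(4,5) by auto
qed

lemma fc_invariant:
  assumes "finite A" "r \<in> A" "\<And>x. x \<in> Pow A \<Longrightarrow> g (symd x {r}) = g x" "r \<in> S"
  shows "fc A g S = 0"
proof -
  have "(\<Sum>x\<in>Pow A. g x * chi S x) = (\<Sum>x\<in>Pow A. - (g x * chi S x))"
  proof (rule sum.reindex_bij_witness[of _ "\<lambda>x. symd x {r}" "\<lambda>x. symd x {r}"])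
    fix x assume x: "x \<in> Pow A"
    show "symd (symd x {r}) {r} = x" unfolding symd_def by auto
    show "symd x {r} \<in> Pow A" using x assms(2) unfolding symd_def by auto
    have "finite x" using x assms finite_subset[of x A] by simp
    then show "- (g (symd x {r}) * chi S (symd x {r})) = g x * chi S x"
      using chi_flip[of x r S] assms(3)[OF x] assms(4) by simp
  next
    fix x assume x: "x \<in> Pow A"
    show "symd (symd x {r}) {r} = x" unfolding symd_def by auto
    show "symd x {r} \<in> Pow A" using x assms(2) unfolding symd_def by auto
  qed
  then have "(\<Sum>x\<in>Pow A. g x * chi S x) = 0" by (simp add: sum_negf)
  then show ?thesis unfolding fc_def by simp
qed



lemma sum_swap3:
  "(\<Sum>x\<in>X. \<Sum>s\<in>S. \<Sum>t\<in>T. f x s t) = (\<Sum>s\<in>S. \<Sum>t\<in>T. \<Sum>x\<in>X. f x s t)"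
proof -
  have "(\<Sum>x\<in>X. \<Sum>s\<in>S. \<Sum>t\<in>T. f x s t) = (\<Sum>s\<in>S. \<Sum>x\<in>X. \<Sum>t\<in>T. f x s t)"
    by (rule sum.swap)
  also have "\<dots> = (\<Sum>s\<in>S. \<Sum>t\<in>T. \<Sum>x\<in>X. f x s t)"
    by (rule sum.cong[OF refl], rule sum.swap)
  finally show ?thesis .
qed

lemma triple_expand:
  fixes c :: "nat set \<Rightarrow> real" and h :: "nat set \<Rightarrow> nat set \<Rightarrow> real" and r :: "nat set \<Rightarrow> real"
  shows "(\<Sum>x\<in>X. (\<Sum>S\<in>P. c S * h S x) * (\<Sum>T\<in>P. c T * h T x) * r x)
   = (\<Sum>S\<in>P. \<Sum>T\<in>P. (c S * c T) * (\<Sum>x\<in>X. h S x * h T x * r x))"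
proof -
  have "(\<Sum>x\<in>X. (\<Sum>S\<in>P. c S * h S x) * (\<Sum>T\<in>P. c T * h T x) * r x)
      = (\<Sum>x\<in>X. \<Sum>S\<in>P. \<Sum>T\<in>P. (c S * c T) * (h S x * h T x * r x))"
  proof (rule sum.cong[OF refl])
    fix x assume "x \<in> X"
    have "(\<Sum>S\<in>P. c S * h S x) * (\<Sum>T\<in>P. c T * h T x) * r x
        = (\<Sum>S\<in>P. \<Sum>T\<in>P. (c S * h S x) * (c T * h T x) * r x)"
      by (subst sum_product) (simp only: sum_distrib_right)
    also have "\<dots> = (\<Sum>S\<in>P. \<Sum>T\<in>P. (c S * c T) * (h S x * h T x * r x))"
      by (simp add: ac_simps)
    finally show "(\<Sum>S\<in>P. c S * h S x) * (\<Sum>T\<in>P. c T * h T x) * r x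
        = (\<Sum>S\<in>P. \<Sum>T\<in>P. (c S * c T) * (h S x * h T x * r x))" .
  qed
  also have "\<dots> = (\<Sum>S\<in>P. \<Sum>T\<in>P. \<Sum>x\<in>X. (c S * c T) * (h S x * h T x * r x))"
    by (rule sum_swap3)
  also have "\<dots> = (\<Sum>S\<in>P. \<Sum>T\<in>P. (c S * c T) * (\<Sum>x\<in>X. h S x * h T x * r x))"
    by (simp add: sum_distrib_left)
  finally show ?thesis .
qed

lemma chi3:
  assumes "finite A" "S \<subseteq> A" "T \<subseteq> A" "R \<subseteq> A"
  shows "(\<Sum>x\<in>Pow A. chi S x * chi T x * chi R x) = (if symd S T = R then 2 ^ card A else 0)"
proof -
  have "(\<Sum>x\<in>Pow A. chi S x * chi T x * chi R x) = (\<Sum>x\<in>Pow A. chi (symd S T) x * chi R x)"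
  proof (rule sum.cong[OF refl])
    fix x assume "x \<in> Pow A"
    then have "finite x" using assms finite_subset[of x A] by simp
    then show "chi S x * chi T x * chi R x = chi (symd S T) x * chi R x" using chi_mult by simp
  qed
  also have "\<dots> = (if symd S T = R then 2 ^ card A else 0)"
    by (rule chi_orth) (use assms in \<open>auto simp: symd_def\<close>)
  finally show ?thesis .
qed

lemma Lp_cases:
  assumes "finite A" "S \<subseteq> A" "0 \<notin> S" "card S = 1 \<or> card S = card A - 1" "0 \<in> A"
  shows "(\<exists>a\<in>A - {0}. S = {a}) \<or> S = A - {0}"
proof (cases "card S = 1")
  case True
  then obtain a where "S = {a}" using card_1_singletonE by blast
  then show ?thesis using assms by auto
next
  case False
  then have c: "card S = card A - 1" using assms by simp
  have sub: "S \<subseteq> A - {0}" using assms by auto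
  have cA: "card (A - {0}) = card A - 1" using assms(1,5) by (simp add: card_Diff_singleton)
  have "finite (A - {0})" using assms(1) by simp
  then have "S = A - {0}" using card_subset_eq[OF _ sub] c cA by simp
  then show ?thesis by simp
qed

lemma sidon:
  fixes V :: "nat set"
  assumes fV: "finite V" and cV: "4 \<le> card V"
    and S: "(\<exists>a\<in>V. S = {a}) \<or> S = V" and T: "(\<exists>a\<in>V. T = {a}) \<or> T = V"
    and S': "(\<exists>a\<in>V. S' = {a}) \<or> S' = V" and T': "(\<exists>a\<in>V. T' = {a}) \<or> T' = V"
    and ST: "S \<noteq> T" and eq: "symd S' T' = symd S T"
  shows "(S' = S \<and> T' = T) \<or> (S' = T \<and> T' = S)"
proof -
  have ss: "symd {a} {b} = (if a = b then {} else {a, b})" for a b :: nat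
    unfolding symd_def by auto
  have sV: "symd {a} V = V - {a}" "symd V {a} = V - {a}" if "a \<in> V" for a
    using that unfolding symd_def by auto
  have VV: "symd V V = {}" unfolding symd_def by auto
  have cVa: "card (V - {a}) \<ge> 3" if "a \<in> V" for a
    using that fV cV by (simp add: card_Diff_singleton)
  have c2: "card {a, b} \<le> 2" for a b :: nat by (simp add: card_insert_if)
  have ne: "V - {a} \<noteq> {a', b'}" if "a \<in> V" for a a' b'
  proof
    assume e: "V - {a} = {a', b'}"
    have "card (V - {a}) \<le> 2" unfolding e by (rule c2)
    with cVa[OF that] show False by simp
  qed
  have ne0: "V - {a} \<noteq> {}" if "a \<in> V" for a
  proof
    assume e: "V - {a} = {}"
    have "3 \<le> card (V - {a})" using cVa[OF that] .
    then have "3 \<le> card ({}::nat set)" unfolding e .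
    then show False by simp
  qed
  have inj: "a = a'" if e: "V - {a} = V - {a'}" and "a \<in> V" "a' \<in> V" for a a'
  proof (rule ccontr)
    assume "a \<noteq> a'"
    then have "a \<in> V - {a'}" using that by simp
    then have "a \<in> V - {a}" unfolding e .
    then show False by simp
  qed
  show ?thesis
  proof -
    from S show ?thesis
    proof
      assume "\<exists>a\<in>V. S = {a}"
      then obtain a where a: "a \<in> V" "S = {a}" by blast
      from T show ?thesis
      proof
        assume "\<exists>b\<in>V. T = {b}"
        then obtain b where b: "b \<in> V" "T = {b}" by blast
        have ab: "a \<noteq> b" using ST a b by auto
        have R: "symd S T = {a, b}" using a b ab ss by simp
        from S' show ?thesis
        proof
          assume "\<exists>a'\<in>V. S' = {a'}"
          then obtain a' where a': "a' \<in> V" "S' = {a'}" by blast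
          from T' show ?thesis
          proof
            assume "\<exists>b'\<in>V. T' = {b'}"
            then obtain b' where b': "b' \<in> V" "T' = {b'}" by blast
            have e: "symd S' T' = {a, b}" using eq R by simp
            have "a' \<noteq> b'"
            proof
              assume "a' = b'"
              then have "symd S' T' = {}" using a' b' ss[of a' b'] by simp
              then show False using e by simp
            qed
            then have "{a', b'} = {a, b}" using e a' b' ss[of a' b'] by simp
            then have "(a' = a \<and> b' = b) \<or> (a' = b \<and> b' = a)" by (simp add: doubleton_eq_iff)
            then show ?thesis using a b a' b' by auto
          next
            assume "T' = V"
            then have "V - {a'} = {a, b}" using eq R a' sV by simp
            then show ?thesis using ne a' by blast
          qed
        next
          assume "S' = V"
          from T' show ?thesis
          proof
            assume "\<exists>b'\<in>V. T' = {b'}"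
            then obtain b' where b': "b' \<in> V" "T' = {b'}" by blast
            then have "V - {b'} = {a, b}" using eq R \<open>S' = V\<close> sV by simp
            then show ?thesis using ne b' by blast
          next
            assume "T' = V"
            then show ?thesis using eq R \<open>S' = V\<close> VV by simp
          qed
        qed
      next
        assume "T = V"
        have R: "symd S T = V - {a}" using a \<open>T = V\<close> sV by simp
        from S' show ?thesis
        proof
          assume "\<exists>a'\<in>V. S' = {a'}"
          then obtain a' where a': "a' \<in> V" "S' = {a'}" by blast
          from T' show ?thesis
          proof
            assume "\<exists>b'\<in>V. T' = {b'}"
            then obtain b' where b': "b' \<in> V" "T' = {b'}" by blast
            have "symd S' T' = (if a' = b' then {} else {a', b'})" using a' b' ss by simp
            then have "V - {a} = (if a' = b' then {} else {a', b'})" using eq R by simp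
            then have False using ne[OF a(1), of a' b'] ne0[OF a(1)] by (cases "a' = b'") simp_all
            then show ?thesis ..
          next
            assume "T' = V"
            then have "V - {a'} = V - {a}" using eq R a' sV by simp
            then have "a' = a" using inj a a' by blast
            then show ?thesis using a a' \<open>T' = V\<close> \<open>T = V\<close> by simp
          qed
        next
          assume "S' = V"
          from T' show ?thesis
          proof
            assume "\<exists>b'\<in>V. T' = {b'}"
            then obtain b' where b': "b' \<in> V" "T' = {b'}" by blast
            then have "V - {b'} = V - {a}" using eq R \<open>S' = V\<close> sV by simp
            then have "b' = a" using inj a b' by blast
            then show ?thesis using a b' \<open>S' = V\<close> \<open>T = V\<close> by simp
          next
            assume "T' = V"
            then show ?thesis using eq R \<open>S' = V\<close> VV ne0[OF a(1)] by simp
          qed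
        qed
      qed
    next
      assume "S = V"
      from T obtain b where b: "b \<in> V" "T = {b}" using ST \<open>S = V\<close> by blast
      have R: "symd S T = V - {b}" using b \<open>S = V\<close> sV by simp
      from S' show ?thesis
      proof
        assume "\<exists>a'\<in>V. S' = {a'}"
        then obtain a' where a': "a' \<in> V" "S' = {a'}" by blast
        from T' show ?thesis
        proof
          assume "\<exists>b'\<in>V. T' = {b'}"
          then obtain b' where b': "b' \<in> V" "T' = {b'}" by blast
          have "symd S' T' = (if a' = b' then {} else {a', b'})" using a' b' ss by simp
          then have "V - {b} = (if a' = b' then {} else {a', b'})" using eq R by simp
          then have False using ne[OF b(1), of a' b'] ne0[OF b(1)] by (cases "a' = b'") simp_all
          then show ?thesis ..
        next
          assume "T' = V"
          then have "V - {a'} = V - {b}" using eq R a' sV by simp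
          then have "a' = b" using inj b a' by blast
          then show ?thesis using b a' \<open>T' = V\<close> \<open>S = V\<close> by simp
        qed
      next
        assume "S' = V"
        from T' show ?thesis
        proof
          assume "\<exists>b'\<in>V. T' = {b'}"
          then obtain b' where b': "b' \<in> V" "T' = {b'}" by blast
          then have "V - {b'} = V - {b}" using eq R \<open>S' = V\<close> sV by simp
          then have "b' = b" using inj b b' by blast
          then show ?thesis using b b' \<open>S' = V\<close> \<open>S = V\<close> by simp
        next
          assume "T' = V"
          then show ?thesis using eq R \<open>S' = V\<close> VV ne0[OF b(1)] by simp
        qed
      qed
    qed
  qed
qed



lemma dictator:
  assumes fA: "finite A" and z0: "0 \<in> A" and c5: "5 \<le> card A"
    and pm: "\<And>x. x \<in> Pow A \<Longrightarrow> g x = 1 \<or> g x = -1"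
    and supp: "\<And>S. S \<in> Pow A \<Longrightarrow> fc A g S \<noteq> 0 \<Longrightarrow> 0 \<notin> S \<and> (card S = 1 \<or> card S = card A - 1)"
  shows "\<exists>S\<in>Pow A. 0 \<notin> S \<and> (card S = 1 \<or> card S = card A - 1) \<and> (\<forall>x\<in>Pow A. g x = g {} * chi S x)"
proof -
  let ?c = "fc A g"
  let ?P = "Pow A"
  let ?V = "A - {0}"
  let ?N = "(2::real) ^ card A"
  have finP: "finite ?P" using fA by simp
  have inv: "g x = (\<Sum>S\<in>?P. ?c S * chi S x)" if "x \<in> ?P" for x
    using fourier_inv[OF fA, of x g] that by simp
  have form: "(\<exists>a\<in>?V. S = {a}) \<or> S = ?V" if "S \<in> ?P" "?c S \<noteq> 0" for S
    using Lp_cases[OF fA, of S] supp[OF that] that z0 by auto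
  have fV: "finite ?V" using fA by simp
  have cV: "4 \<le> card ?V" using c5 z0 fA by (simp add: card_Diff_singleton)
  have key: "S = T" if S: "S \<in> ?P" "?c S \<noteq> 0" and T: "T \<in> ?P" "?c T \<noteq> 0" for S T
  proof (rule ccontr)
    assume ST: "S \<noteq> T"
    define R where "R = symd S T"
    have RA: "R \<subseteq> A" using S T unfolding R_def symd_def by auto
    have Rne: "R \<noteq> {}" using ST symd_empty_iff unfolding R_def by auto
    have A1: "(\<Sum>x\<in>?P. chi R x) = 0" using chi_sum[OF fA RA] Rne by simp
    have A2: "(\<Sum>x\<in>?P. chi R x) = (\<Sum>x\<in>?P. (\<Sum>S\<in>?P. ?c S * chi S x) * (\<Sum>T\<in>?P. ?c T * chi T x) * chi R x)"
    proof (rule sum.cong[OF refl])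
      fix x assume x: "x \<in> ?P"
      have "g x * g x = 1" using pm[OF x] by auto
      then have "chi R x = g x * g x * chi R x" by simp
      then show "chi R x = (\<Sum>S\<in>?P. ?c S * chi S x) * (\<Sum>T\<in>?P. ?c T * chi T x) * chi R x"
        using inv[OF x] by simp
    qed
    define F where "F S' T' = (if symd S' T' = R then ?c S' * ?c T' * ?N else 0)" for S' T'
    have A3: "(\<Sum>x\<in>?P. (\<Sum>S\<in>?P. ?c S * chi S x) * (\<Sum>T\<in>?P. ?c T * chi T x) * chi R x)
        = (\<Sum>S'\<in>?P. \<Sum>T'\<in>?P. F S' T')"
      unfolding triple_expand
    proof (intro sum.cong refl)
      fix S' T' assume "S' \<in> ?P" "T' \<in> ?P"
      then show "?c S' * ?c T' * (\<Sum>x\<in>?P. chi S' x * chi T' x * chi R x) = F S' T'"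
        using chi3[OF fA _ _ RA, of S' T'] unfolding F_def by simp
    qed
    have A4: "(\<Sum>S'\<in>?P. \<Sum>T'\<in>?P. F S' T') = F S T + F T S"
    proof -
      have "(\<Sum>S'\<in>?P. \<Sum>T'\<in>?P. F S' T') = (\<Sum>p\<in>?P \<times> ?P. F (fst p) (snd p))"
        by (simp add: sum.cartesian_product case_prod_beta)
      also have "\<dots> = (\<Sum>p\<in>{(S, T), (T, S)}. F (fst p) (snd p))"
      proof (rule sum.mono_neutral_right)
        show "finite (?P \<times> ?P)" using finP by simp
        show "{(S, T), (T, S)} \<subseteq> ?P \<times> ?P" using S T by auto
        show "\<forall>p\<in>?P \<times> ?P - {(S, T), (T, S)}. F (fst p) (snd p) = 0"
        proof
          fix p assume p: "p \<in> ?P \<times> ?P - {(S, T), (T, S)}"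
          obtain S' T' where pe: "p = (S', T')" by (cases p)
          have S'P: "S' \<in> ?P" and T'P: "T' \<in> ?P" and nn: "\<not> ((S' = S \<and> T' = T) \<or> (S' = T \<and> T' = S))"
            using p pe by auto
          show "F (fst p) (snd p) = 0"
          proof (cases "symd S' T' = R \<and> ?c S' \<noteq> 0 \<and> ?c T' \<noteq> 0")
            case True
            have "(S' = S \<and> T' = T) \<or> (S' = T \<and> T' = S)"
              by (rule sidon[OF fV cV form[OF S] form[OF T] form[OF S'P] form[OF T'P] ST])
                 (use True R_def in auto)
            then show ?thesis using nn by blast
          next
            case False
            then show ?thesis unfolding F_def pe by auto
          qed
        qed
      qed
      also have "\<dots> = F S T + F T S" using ST by simp
      finally show ?thesis .
    qed
    have "symd T S = R" unfolding R_def symd_def by auto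
    then have "F S T + F T S = 2 * ?N * (?c S * ?c T)" unfolding F_def R_def by simp
    moreover have "2 * ?N * (?c S * ?c T) \<noteq> 0" using S T by simp
    ultimately show False using A1 A2 A3 A4 by simp
  qed
  have "\<exists>S0\<in>?P. ?c S0 \<noteq> 0"
  proof (rule ccontr)
    assume "\<not> (\<exists>S0\<in>?P. ?c S0 \<noteq> 0)"
    then have z: "?c S = 0" if "S \<in> ?P" for S using that by blast
    have "g {} = (\<Sum>S\<in>?P. ?c S * chi S {})" using inv by simp
    also have "\<dots> = 0" using z by simp
    finally show False using pm[of "{}"] by simp
  qed
  then obtain S0 where S0: "S0 \<in> ?P" "?c S0 \<noteq> 0" by blast
  have gx: "g x = ?c S0 * chi S0 x" if x: "x \<in> ?P" for x
  proof -
    have "g x = (\<Sum>S\<in>?P. ?c S * chi S x)" using inv[OF x] .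
    also have "\<dots> = (\<Sum>S\<in>?P. if S = S0 then ?c S0 * chi S0 x else 0)"
    proof (rule sum.cong[OF refl])
      fix S assume "S \<in> ?P"
      then show "?c S * chi S x = (if S = S0 then ?c S0 * chi S0 x else 0)"
        using key[OF _ _ S0] by (cases "S = S0") auto
    qed
    also have "\<dots> = ?c S0 * chi S0 x" using finP S0 by (simp add: sum.delta)
    finally show ?thesis .
  qed
  have "chi S0 {} = 1" unfolding chi_def by simp
  then have g0: "g {} = ?c S0" using gx[of "{}"] by simp
  show ?thesis using S0 supp[OF S0] gx g0 by auto
qed



lemma hamming_symd: "hamming x y = card (symd x y)"
  unfolding hamming_def symd_def ..

lemma card_symd_parity:
  assumes "finite x" "finite z"
  shows "even (card (symd x z)) \<longleftrightarrow> (even (card x) \<longleftrightarrow> even (card z))"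
proof -
  have e1: "x = (x - z) \<union> (x \<inter> z)" by blast
  have e2: "z = (z - x) \<union> (x \<inter> z)" by blast
  have c1: "card x = card (x - z) + card (x \<inter> z)"
    by (subst e1, rule card_Un_disjoint) (use assms in auto)
  have c2: "card z = card (z - x) + card (x \<inter> z)"
    by (subst e2, rule card_Un_disjoint) (use assms in auto)
  have c3: "card (symd x z) = card (x - z) + card (z - x)"
    unfolding symd_def by (rule card_Un_disjoint) (use assms in auto)
  show ?thesis unfolding c1 c2 c3 by presburger
qed

lemma symd_comm: "symd a b = symd b a" unfolding symd_def by auto
lemma symd_assoc_swap: "symd (symd x a) b = symd (symd x b) a" unfolding symd_def by auto
lemma symd_cancel: "symd a (symd a z) = z" unfolding symd_def by auto
lemma symd_empty_left: "symd {} z = z" unfolding symd_def by auto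
lemma symd_sub: "x \<subseteq> A \<Longrightarrow> z \<subseteq> A \<Longrightarrow> symd x z \<subseteq> A" unfolding symd_def by auto

definition sg :: "nat set \<Rightarrow> nat \<Rightarrow> real" where
  "sg a i = (if i \<in> a then -1 else 1)"

lemma sg_sum:
  assumes "a \<subseteq> {0..<N}" "b \<subseteq> {0..<N}"
  shows "(\<Sum>i<N. sg a i * sg b i) = real N - 2 * real (card (symd a b))"
proof -
  have pt: "sg a i * sg b i = 1 - 2 * (if i \<in> symd a b then 1 else 0)" for i
    unfolding sg_def symd_def by auto
  have "(\<Sum>i<N. (if i \<in> symd a b then 1 else 0::real)) = real (card ({..<N} \<inter> symd a b))"
    by (simp add: sum.inter_restrict[symmetric])
  moreover have "{..<N} \<inter> symd a b = symd a b" using assms unfolding symd_def by auto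
  ultimately have "(\<Sum>i<N. (if i \<in> symd a b then 1 else 0::real)) = real (card (symd a b))" by simp
  then show ?thesis unfolding pt by (simp add: sum_subtractf sum_distrib_left[symmetric])
qed

lemma cnt_sum:
  assumes "finite I" "finite D"
  shows "card {i\<in>I. s i \<in> D} = (\<Sum>j\<in>D. card {i\<in>I. s i = j})"
proof -
  have "card {i\<in>I. s i \<in> D} = (\<Sum>i\<in>I. if s i \<in> D then 1 else 0)"
    using assms(1) by (simp add: sum.inter_filter[symmetric])
  also have "\<dots> = (\<Sum>i\<in>I. \<Sum>j\<in>D. if s i = j then 1 else 0)"
    using assms(2) by (intro sum.cong refl) (simp add: sum.delta)
  also have "\<dots> = (\<Sum>j\<in>D. \<Sum>i\<in>I. if s i = j then 1 else 0)" by (rule sum.swap)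
  also have "\<dots> = (\<Sum>j\<in>D. card {i\<in>I. s i = j})"
    using assms(1) by (intro sum.cong refl) (simp add: sum.inter_filter[symmetric])
  finally show ?thesis .
qed

lemma sum_sq_pm:
  fixes h :: "'a \<Rightarrow> real"
  assumes "finite X" "\<And>x. x \<in> X \<Longrightarrow> h x = 1 \<or> h x = -1"
  shows "(\<Sum>x\<in>X. (h x)^2) = real (card X)"
proof -
  have "(\<Sum>x\<in>X. (h x)^2) = (\<Sum>x\<in>X. 1)"
  proof (rule sum.cong[OF refl])
    fix x assume "x \<in> X"
    then have "h x = 1 \<or> h x = -1" using assms(2) by blast
    then show "(h x)^2 = 1" by (elim disjE) simp_all
  qed
  then show ?thesis by simp
qed

lemma double_sum_zero:
  assumes "finite X" "finite Y" "\<And>x y. x \<in> X \<Longrightarrow> y \<in> Y \<Longrightarrow> (0::real) \<le> h x y"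
    and "(\<Sum>x\<in>X. \<Sum>y\<in>Y. h x y) = 0" "x \<in> X" "y \<in> Y"
  shows "h x y = 0"
proof -
  have "\<forall>x\<in>X. (\<Sum>y\<in>Y. h x y) = 0"
    using assms(1,3,4) by (subst (asm) sum_nonneg_eq_0_iff) (auto intro: sum_nonneg)
  then have "(\<Sum>y\<in>Y. h x y) = 0" using assms(5) by blast
  then show ?thesis using assms(2,3,5,6) by (subst (asm) sum_nonneg_eq_0_iff) auto
qed



lemma symd_cancel2: "symd (symd x a) a = x" unfolding symd_def by auto

lemma kraw_one_formula:
  assumes "0 < k" "k < n"
  shows "real n * of_int (kraw n k 1) = real (n choose k) * (real n - 2 * real k)"
proof -
  obtain k0 where k0: "k = Suc k0" using assms by (cases k) auto
  obtain n0 where n0: "n = Suc n0" using assms by (cases n) auto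
  have K: "kraw n k 1 = int (n0 choose k) - int (n0 choose k0)"
    using k0 n0 by (simp add: kraw_0)
  have a1: "(n - k) * (n choose k) = n * (n0 choose k)"
    using binomial_absorb_comp[of n k] n0 by simp
  have a2: "k * (n choose k) = n * (n0 choose k0)"
    using binomial_absorption[of k0 n] n0 k0 by simp
  have r1: "(real n - real k) * real (n choose k) = real n * real (n0 choose k)"
    using arg_cong[OF a1, of real] assms by (simp add: of_nat_diff)
  have r2: "real k * real (n choose k) = real n * real (n0 choose k0)"
    using arg_cong[OF a2, of real] by simp
  show ?thesis unfolding K using r1 r2 by (simp add: algebra_simps)
qed



theorem theorem5p4:
  fixes n k n' k' :: nat
    and E E' :: "nat set \<Rightarrow> nat set \<Rightarrow> bool"
    and f :: "nat set \<Rightarrow> nat set"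
  assumes "real (n + 1) / 2 < real k" and "k < n"
    and "real n / real k = real n' / real k'"
    and "even k" and "even k'"
    and "between_graph n k E" and "between_graph n' k' E'"
    and "graph_hom (even_cube n) E (even_cube n') E' f"
  shows "n dvd n' \<and> k dvd k' \<and> inj_on f (even_cube n)"
proof -
  have "real (n + 1) < real (2 * k)" using assms(1) by simp
  then have nk: "n + 1 < 2 * k" by (simp only: of_nat_less_iff)
  have k4: "4 \<le> k" using nk assms(2) assms(4) by presburger
  have n5: "5 \<le> n" using k4 assms(2) by simp
  have kpos': "0 < k'"
  proof (rule ccontr)
    assume "\<not> 0 < k'"
    then have "real n / real k = 0" using assms(3) by simp
    then show False using k4 n5 by simp
  qed
  have cross: "n * k' = n' * k"
  proof -
    have "real n * real k' = real n' * real k"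
      using assms(3) k4 kpos' by (simp add: field_simps)
    then show ?thesis by (simp only: of_nat_mult[symmetric] of_nat_eq_iff)
  qed
  define U where "U = {0..<n}"
  define P where "P = Pow U"
  define Z where "Z = {z. z \<subseteq> U \<and> card z = k}"
  have fU: "finite U" and cU: "card U = n" and z0U: "0 \<in> U" unfolding U_def using n5 by auto
  have finP: "finite P" unfolding P_def using fU by simp
  have cP: "card P = 2 ^ n" unfolding P_def using fU cU by (simp add: card_Pow)
  have finZ: "finite Z" unfolding Z_def by (rule finite_subset[of _ "Pow U"]) (auto simp: fU)
  have cZ: "card Z = n choose k" unfolding Z_def using fU cU by (simp add: n_subsets)
  have finx: "finite x" if "x \<in> P" for x using that fU finite_subset[of x U] unfolding P_def by simp
  have hE: "E x y" if "x \<in> even_cube n" "y \<in> even_cube n" "hamming x y = k" for x y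
    using assms(6) that unfolding between_graph_def by blast
  have hE': "k' \<le> hamming x y" if "E' x y" for x y
    using assms(7) that unfolding between_graph_def by blast
  have hf1: "f x \<in> even_cube n'" if "x \<in> even_cube n" for x
    using assms(8) that unfolding graph_hom_def by blast
  have hf2: "E' (f x) (f y)" if "x \<in> even_cube n" "y \<in> even_cube n" "E x y" for x y
    using assms(8) that unfolding graph_hom_def by blast
  have ec: "x \<in> even_cube n \<longleftrightarrow> x \<in> P \<and> even (card x)" for x
    unfolding even_cube_def P_def U_def by auto
  define rep where "rep x = (if even (card x) then x else symd x {0})" for x
  have flip_par: "even (card (symd x {0})) \<longleftrightarrow> \<not> even (card x)" if "x \<in> P" for x
    using card_symd_parity[OF finx[OF that], of "{0}"] by simp
  have flipP: "symd x {0} \<in> P" if "x \<in> P" for x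
    using that z0U unfolding P_def symd_def by auto
  have rep_ev: "rep x \<in> even_cube n" if x: "x \<in> P" for x
    using flip_par[OF x] flipP[OF x] x unfolding rep_def ec by auto
  have rep_id: "rep x = x" if "x \<in> even_cube n" for x
    using that unfolding rep_def ec by auto
  have rep_flip: "rep (symd x {0}) = rep x" if x: "x \<in> P" for x
    using flip_par[OF x] unfolding rep_def by (auto simp: symd_cancel2)
  have zP: "z \<in> P" if "z \<in> Z" for z using that unfolding Z_def P_def by auto
  have sxzP: "symd x z \<in> P" if "x \<in> P" "z \<in> Z" for x z
    using that symd_sub unfolding Z_def P_def by auto
  have rep_edge: "rep (symd x z) = symd (rep x) z" if x: "x \<in> P" and z: "z \<in> Z" for x z
  proof -
    have "even (card z)" using z assms(4) unfolding Z_def by simp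
    then have "even (card (symd x z)) \<longleftrightarrow> even (card x)"
      using card_symd_parity[OF finx[OF x] finx[OF zP[OF z]]] by simp
    then show ?thesis unfolding rep_def by (auto simp: symd_assoc_swap)
  qed
  have ham_edge: "hamming (rep x) (rep (symd x z)) = k" if x: "x \<in> P" and z: "z \<in> Z" for x z
    using z unfolding rep_edge[OF x z] hamming_symd symd_cancel Z_def by simp
  have Dge: "k' \<le> hamming (f (rep x)) (f (rep (symd x z)))" if x: "x \<in> P" and z: "z \<in> Z" for x z
    using hE'[OF hf2[OF rep_ev[OF x] rep_ev[OF sxzP[OF x z]] hE[OF rep_ev[OF x] rep_ev[OF sxzP[OF x z]] ham_edge[OF x z]]]] .
  have fsub: "f (rep x) \<subseteq> {0..<n'}" if x: "x \<in> P" for x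
    using hf1[OF rep_ev[OF x]] unfolding even_cube_def by auto
  define g where "g i x = sg (f (rep x)) i" for i x
  have gpm: "g i x = 1 \<or> g i x = -1" for i x unfolding g_def sg_def by auto
  have gsum: "(\<Sum>i<n'. g i x * g i y) = real n' - 2 * real (hamming (f (rep x)) (f (rep y)))"
    if "x \<in> P" "y \<in> P" for x y
    unfolding g_def hamming_symd using sg_sum[OF fsub fsub] that by simp
  define \<mu> where "\<mu> = real_of_int (kraw n k 1)"
  have lamge: "\<mu> \<le> of_int (lam U S k)" and lamgt: "card S \<noteq> 1 \<Longrightarrow> card S \<noteq> n - 1 \<Longrightarrow> \<mu> < of_int (lam U S k)"
    if S: "S \<in> P" for S
  proof -
    have SU: "S \<subseteq> U" using S unfolding P_def by simp
    have l: "lam U S k = kraw n k (card S)" using lam_kraw[OF fU SU] cU by simp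
    have "card S \<le> n" using card_mono[OF fU SU] cU by simp
    then have km: "kraw n k 1 \<le> kraw n k (card S) \<and> (card S \<noteq> 1 \<and> card S \<noteq> n - 1 \<longrightarrow> kraw n k 1 < kraw n k (card S))"
      using kraw_min[OF assms(4) nk assms(2)] by blast
    show "\<mu> \<le> of_int (lam U S k)" unfolding \<mu>_def l using km by simp
    show "\<mu> < of_int (lam U S k)" if "card S \<noteq> 1" "card S \<noteq> n - 1"
      unfolding \<mu>_def l using km that by simp
  qed
  have lamge': "\<And>S. S \<in> Pow U \<Longrightarrow> \<mu> \<le> of_int (lam U S k)" using lamge unfolding P_def by blast
  have QF0: "QF U (g i) 0 = 2 ^ n" for i
    using QF_zero[OF fU, of "g i"] sum_sq_pm[OF finP, of "g i"] gpm cP unfolding P_def by simp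
  have QFge: "\<mu> * 2 ^ n \<le> QF U (g i) k" for i
    using QF_ge[OF fU lamge', of "g i"] QF0[of i] by simp
  have sumQF: "(\<Sum>i<n'. QF U (g i) k) = (\<Sum>x\<in>P. \<Sum>z\<in>Z. real n' - 2 * real (hamming (f (rep x)) (f (rep (symd x z)))))"
  proof -
    have "(\<Sum>i<n'. QF U (g i) k) = (\<Sum>i<n'. \<Sum>x\<in>P. \<Sum>z\<in>Z. g i x * g i (symd x z))"
      unfolding QF_def P_def Z_def ..
    also have "\<dots> = (\<Sum>x\<in>P. \<Sum>z\<in>Z. \<Sum>i<n'. g i x * g i (symd x z))"
      by (rule sum_swap3)
    also have "\<dots> = (\<Sum>x\<in>P. \<Sum>z\<in>Z. real n' - 2 * real (hamming (f (rep x)) (f (rep (symd x z)))))"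
      by (intro sum.cong refl) (rule gsum; use sxzP in auto)
    finally show ?thesis .
  qed
  have ident: "real n' * \<mu> = real (n choose k) * (real n' - 2 * real k')"
  proof -
    have f1: "real n * \<mu> = real (n choose k) * (real n - 2 * real k)"
      unfolding \<mu>_def using kraw_one_formula[of k n] k4 assms(2) by simp
    have cr: "real n * real k' = real n' * real k" using cross by (simp only: of_nat_mult[symmetric])
    have "real n * (real n' * \<mu>) = real n * (real (n choose k) * (real n' - 2 * real k'))"
    proof -
      have "real n * (real n' * \<mu>) = real n' * (real n * \<mu>)" by simp
      also have "\<dots> = real (n choose k) * (real n' * real n - 2 * (real n' * real k))"
        unfolding f1 by (simp add: algebra_simps)
      also have "\<dots> = real (n choose k) * (real n' * real n - 2 * (real n * real k'))"
        unfolding cr ..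
      also have "\<dots> = real n * (real (n choose k) * (real n' - 2 * real k'))"
        by (simp add: algebra_simps)
      finally show ?thesis .
    qed
    then show ?thesis using n5 by simp
  qed
  define M where "M = real (card P) * real (card Z) * (real n' - 2 * real k')"
  have T_le: "(\<Sum>x\<in>P. \<Sum>z\<in>Z. real n' - 2 * real (hamming (f (rep x)) (f (rep (symd x z))))) \<le> M"
  proof -
    have "(\<Sum>x\<in>P. \<Sum>z\<in>Z. real n' - 2 * real (hamming (f (rep x)) (f (rep (symd x z)))))
        \<le> (\<Sum>x\<in>P. \<Sum>z\<in>Z. real n' - 2 * real k')"
      by (intro sum_mono) (use Dge in auto)
    also have "\<dots> = M" unfolding M_def by simp
    finally show ?thesis .
  qed
  have M_eq: "M = real n' * (\<mu> * 2 ^ n)"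
  proof -
    have "M = 2 ^ n * (real (n choose k) * (real n' - 2 * real k'))" unfolding M_def cP cZ by simp
    also have "\<dots> = 2 ^ n * (real n' * \<mu>)" using ident by simp
    finally show ?thesis by simp
  qed
  have ge: "real n' * (\<mu> * 2 ^ n) \<le> (\<Sum>i<n'. QF U (g i) k)"
  proof -
    have "(\<Sum>i<n'. \<mu> * 2 ^ n) \<le> (\<Sum>i<n'. QF U (g i) k)" by (intro sum_mono) (rule QFge)
    then show ?thesis by simp
  qed
  have eqQF: "QF U (g i) k = \<mu> * 2 ^ n" if "i < n'" for i
  proof -
    have "(\<Sum>i<n'. QF U (g i) k - \<mu> * 2 ^ n) = 0"
      using sumQF T_le M_eq ge by (simp add: sum_subtractf)
    then have "\<forall>i\<in>{..<n'}. QF U (g i) k - \<mu> * 2 ^ n = 0"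
      by (subst (asm) sum_nonneg_eq_0_iff) (use QFge in auto)
    then show ?thesis using that by simp
  qed
  have eqD: "hamming (f (rep x)) (f (rep (symd x z))) = k'" if x: "x \<in> P" and z: "z \<in> Z" for x z
  proof -
    have s: "(\<Sum>x\<in>P. \<Sum>z\<in>Z. 2 * real (hamming (f (rep x)) (f (rep (symd x z)))) - 2 * real k') = 0"
    proof -
      have "(\<Sum>x\<in>P. \<Sum>z\<in>Z. 2 * real (hamming (f (rep x)) (f (rep (symd x z)))) - 2 * real k')
          = M - (\<Sum>x\<in>P. \<Sum>z\<in>Z. real n' - 2 * real (hamming (f (rep x)) (f (rep (symd x z)))))"
      proof -
        have Mf: "M = (\<Sum>x\<in>P. \<Sum>z\<in>Z. real n' - 2 * real k')" unfolding M_def by simp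
        have "(\<Sum>x\<in>P. \<Sum>z\<in>Z. 2 * real (hamming (f (rep x)) (f (rep (symd x z)))) - 2 * real k')
          = (\<Sum>x\<in>P. \<Sum>z\<in>Z. (real n' - 2 * real k') - (real n' - 2 * real (hamming (f (rep x)) (f (rep (symd x z))))))"
          by (intro sum.cong refl) simp
        also have "\<dots> = M - (\<Sum>x\<in>P. \<Sum>z\<in>Z. real n' - 2 * real (hamming (f (rep x)) (f (rep (symd x z)))))"
          unfolding Mf by (simp only: sum_subtractf)
        finally show ?thesis .
      qed
      also have "\<dots> = 0" using sumQF T_le M_eq ge by simp
      finally show ?thesis .
    qed
    have "2 * real (hamming (f (rep x)) (f (rep (symd x z)))) - 2 * real k' = 0"
      by (rule double_sum_zero[OF finP finZ _ s x z]) (use Dge in auto)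
    then show ?thesis by simp
  qed
  have supp: "0 \<notin> S \<and> (card S = 1 \<or> card S = card U - 1)"
    if i: "i < n'" and S: "S \<in> Pow U" and nz: "fc U (g i) S \<noteq> 0" for i S
  proof -
    have "0 \<notin> S"
    proof
      assume "0 \<in> S"
      have "fc U (g i) S = 0"
      proof (rule fc_invariant[OF fU z0U _ \<open>0 \<in> S\<close>])
        fix x assume "x \<in> Pow U"
        then show "g i (symd x {0}) = g i x" unfolding g_def using rep_flip P_def by simp
      qed
      then show False using nz by simp
    qed
    moreover have "card S = 1 \<or> card S = card U - 1"
    proof (rule ccontr)
      assume "\<not> (card S = 1 \<or> card S = card U - 1)"
      then have "\<mu> < of_int (lam U S k)" using lamgt[of S] S cU unfolding P_def by auto
      moreover have "QF U (g i) k = \<mu> * QF U (g i) 0" using eqQF[OF i] QF0 by simp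
      ultimately have "fc U (g i) S = 0" using QF_eq[OF fU lamge' _ S] by blast
      then show False using nz by simp
    qed
    ultimately show ?thesis ..
  qed
  have dict: "\<exists>j\<in>U. \<forall>x\<in>even_cube n. (i \<in> f x \<longleftrightarrow> ((i \<in> f {}) \<noteq> (j \<in> x)))" if i: "i < n'" for i
  proof -
    have c5: "5 \<le> card U" using cU n5 by simp
    have "\<exists>S\<in>Pow U. 0 \<notin> S \<and> (card S = 1 \<or> card S = card U - 1) \<and> (\<forall>x\<in>Pow U. g i x = g i {} * chi S x)"
    proof (rule dictator[OF fU z0U c5])
      show "g i x = 1 \<or> g i x = -1" for x by (rule gpm)
      show "0 \<notin> S \<and> (card S = 1 \<or> card S = card U - 1)" if "S \<in> Pow U" "fc U (g i) S \<noteq> 0" for S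
        using supp[OF i that] .
    qed
    then obtain S where S: "S \<in> Pow U" "0 \<notin> S" "card S = 1 \<or> card S = card U - 1"
      and gS: "\<forall>x\<in>Pow U. g i x = g i {} * chi S x" by blast
    have Sc: "(\<exists>a\<in>U - {0}. S = {a}) \<or> S = U - {0}" using Lp_cases[OF fU _ S(2) S(3) z0U] S(1) by simp
    have e0: "{} \<in> even_cube n" unfolding even_cube_def by simp
    have r0: "rep {} = {}" using rep_id[OF e0] .
    obtain j where j: "j \<in> U" and cj: "\<forall>x\<in>even_cube n. chi S x = (if j \<in> x then -1 else 1)"
    proof -
      from Sc show ?thesis
      proof
        assume "\<exists>a\<in>U - {0}. S = {a}"
        then obtain a where a: "a \<in> U" "S = {a}" by blast
        have "chi S x = (if a \<in> x then -1 else 1)" for x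
          unfolding chi_def a(2) by (cases "a \<in> x") auto
        then show ?thesis using that a by blast
      next
        assume SV: "S = U - {0}"
        have "chi S x = (if 0 \<in> x then -1 else 1)" if x: "x \<in> even_cube n" for x
        proof -
          have xP: "x \<in> P" and ev: "even (card x)" using x ec by auto
          have fx: "finite x" using finx[OF xP] .
          have "S \<inter> x = x - {0}" using SV xP unfolding P_def by auto
          then have "card (S \<inter> x) = (if 0 \<in> x then card x - 1 else card x)" using fx by simp
          moreover have "0 \<in> x \<Longrightarrow> card x \<ge> 1" using fx by (metis card_0_eq empty_iff less_one not_less)
          ultimately show ?thesis unfolding chi_def
          proof (cases "0 \<in> x")
            case True
            assume c: "card (S \<inter> x) = (if 0 \<in> x then card x - 1 else card x)" and "0 \<in> x \<Longrightarrow> 1 \<le> card x"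
            then have "odd (card (S \<inter> x))" using True ev by auto
            then show "(-1::real) ^ card (S \<inter> x) = (if 0 \<in> x then -1 else 1)" using True by (simp add: neg_one_odd_power)
          next
            case False
            assume c: "card (S \<inter> x) = (if 0 \<in> x then card x - 1 else card x)"
            then have "even (card (S \<inter> x))" using False ev by auto
            then show "(-1::real) ^ card (S \<inter> x) = (if 0 \<in> x then -1 else 1)" using False by (simp add: neg_one_even_power)
          qed
        qed
        then show ?thesis using that z0U by blast
      qed
    qed
    show ?thesis
    proof (intro bexI[OF _ j] ballI)
      fix x assume x: "x \<in> even_cube n"
      have xP: "x \<in> Pow U" using x ec P_def by auto
      have "g i x = g i {} * chi S x" using gS xP by blast
      then have "sg (f x) i = sg (f {}) i * (if j \<in> x then -1 else 1)"
        unfolding g_def rep_id[OF x] r0 using cj x by simp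
      then show "i \<in> f x \<longleftrightarrow> ((i \<in> f {}) \<noteq> (j \<in> x))"
        unfolding sg_def by (auto split: if_splits)
    qed
  qed
  have "\<forall>i\<in>{..<n'}. \<exists>j. j \<in> U \<and> (\<forall>x\<in>even_cube n. (i \<in> f x \<longleftrightarrow> ((i \<in> f {}) \<noteq> (j \<in> x))))"
    using dict by blast
  then obtain \<sigma> where \<sigma>U: "\<And>i. i < n' \<Longrightarrow> \<sigma> i \<in> U"
    and \<sigma>f: "\<And>i x. i < n' \<Longrightarrow> x \<in> even_cube n \<Longrightarrow> (i \<in> f x \<longleftrightarrow> ((i \<in> f {}) \<noteq> (\<sigma> i \<in> x)))"
    by (metis bchoice lessThan_iff)
  have fsub': "f x \<subseteq> {0..<n'}" if "x \<in> even_cube n" for x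
    using hf1[OF that] unfolding even_cube_def by auto
  have symdf: "symd (f x) (f y) = {i\<in>{0..<n'}. \<sigma> i \<in> symd x y}"
    if x: "x \<in> even_cube n" and y: "y \<in> even_cube n" for x y
  proof (intro equalityI subsetI)
    fix i assume i: "i \<in> symd (f x) (f y)"
    then have "i < n'" using fsub'[OF x] fsub'[OF y] unfolding symd_def by auto
    then show "i \<in> {i\<in>{0..<n'}. \<sigma> i \<in> symd x y}"
      using i \<sigma>f[OF _ x] \<sigma>f[OF _ y] unfolding symd_def by auto
  next
    fix i assume i: "i \<in> {i\<in>{0..<n'}. \<sigma> i \<in> symd x y}"
    then have "i < n'" by simp
    then show "i \<in> symd (f x) (f y)"
      using i \<sigma>f[OF _ x] \<sigma>f[OF _ y] unfolding symd_def by auto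
  qed
  define m where "m j = card {i\<in>{0..<n'}. \<sigma> i = j}" for j
  have cnt: "card {i\<in>{0..<n'}. \<sigma> i \<in> D} = (\<Sum>j\<in>D. m j)" if "finite D" for D
    unfolding m_def by (rule cnt_sum[OF _ that]) simp
  have ksum: "(\<Sum>j\<in>Z'. m j) = k'" if Z': "Z' \<subseteq> U" "card Z' = k" for Z'
  proof -
    have zZ: "Z' \<in> Z" using Z' unfolding Z_def by simp
    have e0: "{} \<in> even_cube n" unfolding even_cube_def by simp
    have eZ: "Z' \<in> even_cube n" using Z' assms(4) unfolding even_cube_def U_def by auto
    have "hamming (f (rep {})) (f (rep (symd {} Z'))) = k'"
      using eqD[OF _ zZ] unfolding P_def by simp
    then have "card (symd (f {}) (f Z')) = k'"
      unfolding symd_empty_left rep_id[OF e0] rep_id[OF eZ] hamming_symd .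
    then have "card {i\<in>{0..<n'}. \<sigma> i \<in> Z'} = k'"
      unfolding symdf[OF e0 eZ] symd_empty_left .
    moreover have "finite Z'" using Z' fU finite_subset by blast
    ultimately show ?thesis using cnt by simp
  qed
  have mconst: "m j = m j'" if j: "j \<in> U" and j': "j' \<in> U" for j j'
  proof (cases "j = j'")
    case True then show ?thesis by simp
  next
    case False
    have "card (U - {j, j'}) = n - 2" using j j' False fU cU by (simp add: card_Diff_subset)
    then have "k - 1 \<le> card (U - {j, j'})" using assms(2) by simp
    then obtain Z0 where Z0: "Z0 \<subseteq> U - {j, j'}" "card Z0 = k - 1" "finite Z0"
      by (rule obtain_subset_with_card_n)
    have nj: "j \<notin> Z0" and nj': "j' \<notin> Z0" using Z0 by auto
    have "(\<Sum>a\<in>insert j Z0. m a) = k'"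
      using ksum[of "insert j Z0"] Z0 j nj k4 by auto
    moreover have "(\<Sum>a\<in>insert j' Z0. m a) = k'"
      using ksum[of "insert j' Z0"] Z0 j' nj' k4 by auto
    ultimately show ?thesis using nj nj' Z0(3) by simp
  qed
  define m0 where "m0 = m 0"
  have mall: "m j = m0" if "j \<in> U" for j using mconst[OF that z0U] unfolding m0_def .
  have nn': "n' = n * m0"
  proof -
    have "{i\<in>{0..<n'}. \<sigma> i \<in> U} = {0..<n'}" using \<sigma>U by auto
    then have "n' = (\<Sum>j\<in>U. m j)" using cnt[OF fU] by simp
    also have "\<dots> = n * m0" using mall cU by simp
    finally show ?thesis .
  qed
  have kk': "k' = k * m0"
  proof -
    have "{0..<k} \<subseteq> U" using assms(2) unfolding U_def by auto
    then have "k' = (\<Sum>j\<in>{0..<k}. m j)" using ksum[of "{0..<k}"] by simp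
    also have "\<dots> = k * m0" using mall \<open>{0..<k} \<subseteq> U\<close> by (simp add: subset_iff)
    finally show ?thesis .
  qed
  have m0pos: "0 < m0" using kk' kpos' by (cases m0) auto
  have inj: "inj_on f (even_cube n)"
  proof (rule inj_onI)
    fix x y assume x: "x \<in> even_cube n" and y: "y \<in> even_cube n" and fxy: "f x = f y"
    have fs: "finite (symd x y)" using x y ec finx symd_sub unfolding P_def
      by (meson PowD PowI finite_subset fU)
    have "symd (f x) (f y) = {}" unfolding fxy symd_empty_iff ..
    then have "card {i\<in>{0..<n'}. \<sigma> i \<in> symd x y} = 0" using symdf[OF x y] by simp
    moreover have "(\<Sum>j\<in>symd x y. m j) = card {i\<in>{0..<n'}. \<sigma> i \<in> symd x y}" using cnt[OF fs] by (rule sym)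
    ultimately have "(\<Sum>j\<in>symd x y. m j) = 0" by simp
    moreover have "symd x y \<subseteq> U" using x y ec symd_sub unfolding P_def by auto
    ultimately have "card (symd x y) * m0 = 0" using mall by (simp add: subset_iff)
    then have "symd x y = {}" using m0pos fs by simp
    then show "x = y" using symd_empty_iff by simp
  qed
  show ?thesis using nn' kk' inj by simp

qed


end
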